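(* Let $\alpha<_c\beta$ with $\beta/\!\!/\alpha$ an nc border strip with $n$ boxes, let $j\in NE(\beta/\!\!/\alpha)$, and let $w\in CRHW_n$ with $w(\alpha)=\beta$. Define $w'$ to be the unique reverse hookword with the same content as $w$ and with $\mathrm{leg}(w')=\mathrm{leg}(w)\setminus\{j\}$ if $j\in\mathrm{leg}(w)$, and $\mathrm{leg}(w')=\mathrm{leg}(w)\cup\{j\}$ if $j\notin\mathrm{leg}(w)$. Then $w'\in CRHW_n$ and $w'(\alpha)=\beta$.
   Context: A composition is a finite sequence $\alpha=(\alpha_1,\dots,\alpha_k)$ of positive integers; $\ell(\alpha)=k$; its diagram is the set of boxes $(i,j)$, $1\le i\le\ell(\alpha)$, $1\le j\le\alpha_i$, rows top to bottom, columns left to right. For compositions $\gamma=(\gamma_1,\dots,\gamma_l)$, $\delta$ write $\gamma\lessdot_c\delta$ if $\delta=(1,\gamma_1,\dots,\gamma_l)$ or $\delta=(\gamma_1,\dots,\gamma_k+1,\dots,\gamma_l)$ with $\gamma_i\ne\gamma_k$ for all $i<k$; $<_c$ is the transitive closure. For $\gamma<_c\delta$, $\delta/\!\!/\gamma$ consists of the boxes of $\delta$ other than $(\ell(\delta)-\ell(\gamma)+i,j)$, $1\le i\le\ell(\gamma)$, $1\le j\le\gamma_i$. $\mathrm{supp}(\beta/\!\!/\alpha)$ is the set of columns containing a box of $\beta/\!\!/\alpha$; interval shape: supp is a set of consecutive integers. nc border strip: an interval shape such that (1) if $(i,1),(i,2)\in\beta/\!\!/\alpha$ then $(i,1)$ is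 the bottommost box of column 1 of $\beta/\!\!/\alpha$, and (2) if $(i,j),(i,j+1)\in\beta/\!\!/\alpha$ with $j\ge2$ then $(i,j)$ is the topmost box of column $j$ of $\beta/\!\!/\alpha$. $NE(\beta/\!\!/\alpha)$ is the set of $j\in\mathrm{supp}(\beta/\!\!/\alpha)$ such that column $j+1$ of $\beta/\!\!/\alpha$ contains at least one box and $i_1<i_2$ for all boxes $(i_1,j+1),(i_2,j)\in\beta/\!\!/\alpha$. Box-adding operators: $\mathfrak t_1(\alpha)=(1,\alpha_1,\dots,\alpha_k)$; for $i\ge2$, $\mathfrak t_i(\alpha)$ increases the leftmost part equal to $i-1$ by $1$, and is $0$ if none; $\mathfrak t_i(0)=0$. A word $w=\mathfrak t_{i_1}\cdots\mathfrak t_{i_n}$ acts by $w(\alpha)=\mathfrak t_{i_1}(\cdots\mathfrak t_{i_n}(\alpha))$; it is a reverse $k$-hookword if $i_1\le\cdots\le i_{k+1}>i_{k+2}>\cdots>i_n$, with $\mathrm{leg}(w)=\{i_{k+1},\dots,i_n\}$ (a set of distinct integers containing the maximum index). Its content is the vector whose $i$-th entry is the number of occurrences of $\mathfrak t_i$ in $w$; a reverse hookword is determined by its content together with its leg. $w$ is connected if $\{i_1,\dots,i_n\}$ is a set of consecutive integers; $CRHW_n$ is the set of connected reverse hookwords of length $n$. *)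

theory Defs
  imports Main
begin

text \<open>Compositions are lists of positive naturals; rows and columns are 1-indexed.\<close>

definition is_composition :: "nat list \<Rightarrow> bool" where
  "is_composition \<alpha> \<longleftrightarrow> (\<forall>x\<in>set \<alpha>. 0 < x)"

definition c_cover :: "nat list \<Rightarrow> nat list \<Rightarrow> bool" where
  "c_cover \<gamma> \<delta> \<longleftrightarrow> \<delta> = 1 # \<gamma> \<or>
     (\<exists>k < length \<gamma>. (\<forall>i<k. \<gamma> ! i \<noteq> \<gamma> ! k) \<and> \<delta> = \<gamma>[k := Suc (\<gamma> ! k)])"

definition c_less :: "nat list \<Rightarrow> nat list \<Rightarrow> bool" where
  "c_less = tranclp c_cover"

definition boxes :: "nat list \<Rightarrow> (nat \<times> nat) set" where
  "boxes \<alpha> = {(i, j). 1 \<le> i \<and> i \<le> length \<alpha> \<and> 1 \<le> j \<and> j \<le> \<alpha> ! (i - 1)}"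

definition skew :: "nat list \<Rightarrow> nat list \<Rightarrow> (nat \<times> nat) set" where
  "skew \<delta> \<gamma> = boxes \<delta> -
     {(length \<delta> - length \<gamma> + i, j) | i j. 1 \<le> i \<and> i \<le> length \<gamma> \<and> 1 \<le> j \<and> j \<le> \<gamma> ! (i - 1)}"

definition supp :: "(nat \<times> nat) set \<Rightarrow> nat set" where
  "supp S = {j. \<exists>i. (i, j) \<in> S}"

definition interval_shape :: "(nat \<times> nat) set \<Rightarrow> bool" where
  "interval_shape S \<longleftrightarrow> (\<forall>a b c. a \<in> supp S \<longrightarrow> b \<in> supp S \<longrightarrow> a \<le> c \<longrightarrow> c \<le> b \<longrightarrow> c \<in> supp S)"

definition nc_border_strip :: "(nat \<times> nat) set \<Rightarrow> bool" where
  "nc_border_strip S \<longleftrightarrow> interval_shape S \<and>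
     (\<forall>i. (i, 1) \<in> S \<and> (i, 2) \<in> S \<longrightarrow> (\<forall>i'. (i', 1) \<in> S \<longrightarrow> i' \<le> i)) \<and>
     (\<forall>i j. 2 \<le> j \<and> (i, j) \<in> S \<and> (i, Suc j) \<in> S \<longrightarrow> (\<forall>i'. (i', j) \<in> S \<longrightarrow> i \<le> i'))"

definition NE :: "(nat \<times> nat) set \<Rightarrow> nat set" where
  "NE S = {j \<in> supp S. (\<exists>i. (i, Suc j) \<in> S) \<and>
             (\<forall>i1 i2. (i1, Suc j) \<in> S \<longrightarrow> (i2, j) \<in> S \<longrightarrow> i1 < i2)}"

text \<open>Box-adding operators; \<open>None\<close> plays the role of 0.\<close>
fun inc_first :: "nat \<Rightarrow> nat list \<Rightarrow> nat list option" where
  "inc_first v [] = None"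
| "inc_first v (x # xs) = (if x = v then Some (Suc x # xs) else map_option (Cons x) (inc_first v xs))"

definition t_op :: "nat \<Rightarrow> nat list \<Rightarrow> nat list option" where
  "t_op i \<alpha> = (if i = 0 then None else if i = 1 then Some (1 # \<alpha>) else inc_first (i - 1) \<alpha>)"

text \<open>A word \<open>[i\<^sub>1,...,i\<^sub>n]\<close> acts by \<open>t\<^sub>i\<^sub>1(...(t\<^sub>i\<^sub>n(\<alpha>)))\<close>.\<close>
definition apply_word :: "nat list \<Rightarrow> nat list \<Rightarrow> nat list option" where
  "apply_word w \<alpha> = foldr (\<lambda>i acc. Option.bind acc (t_op i)) w (Some \<alpha>)"

text \<open>Reverse k-hookwords (k counted as in the paper: positions 1..k+1 weakly increase,
  positions k+1..n strictly decrease).\<close>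
definition rhw_k :: "nat list \<Rightarrow> nat \<Rightarrow> bool" where
  "rhw_k w k \<longleftrightarrow> k < length w \<and> sorted (take (Suc k) w) \<and> sorted_wrt (>) (drop k w)"

definition reverse_hookword :: "nat list \<Rightarrow> bool" where
  "reverse_hookword w \<longleftrightarrow> (\<forall>x\<in>set w. 0 < x) \<and> (\<exists>k. rhw_k w k)"

definition leg :: "nat list \<Rightarrow> nat set" where
  "leg w = set (drop (THE k. rhw_k w k) w)"

definition content :: "nat list \<Rightarrow> nat \<Rightarrow> nat" where
  "content w = (\<lambda>i. count_list w i)"

definition connected_word :: "nat list \<Rightarrow> bool" where
  "connected_word w \<longleftrightarrow> (\<forall>a b c. a \<in> set w \<longrightarrow> b \<in> set w \<longrightarrow> a \<le> c \<longrightarrow> c \<le> b \<longrightarrow> c \<in> set w)"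

definition CRHW :: "nat \<Rightarrow> nat list set" where
  "CRHW n = {w. length w = n \<and> reverse_hookword w \<and> connected_word w}"

end

theory Submission
  imports Defs "HOL-Library.Multiset"
begin

definition fi :: "nat \<Rightarrow> nat list \<Rightarrow> nat" where
  "fi v xs = length (takeWhile (\<lambda>y. y \<noteq> v) xs)"

lemma fi_props:
  assumes "v \<in> set xs"
  shows "fi v xs < length xs \<and> xs ! fi v xs = v \<and> (\<forall>k < fi v xs. xs ! k \<noteq> v)"
  using assms unfolding fi_def
proof (induction xs)
  case Nil then show ?case by simp
next
  case (Cons x xs)
  show ?case
  proof (cases "x = v")
    case True then show ?thesis by simp
  next
    case False
    then have "v \<in> set xs" using Cons.prems by simp
    with Cons.IH False show ?thesis by (auto simp: nth_Cons split: nat.splits)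
  qed
qed

lemma fi_eqI:
  assumes "i < length xs" "xs ! i = v" "\<forall>k<i. xs ! k \<noteq> v"
  shows "fi v xs = i"
proof -
  have vin: "v \<in> set xs" using assms by (metis nth_mem)
  from fi_props[OF vin] have A: "fi v xs < length xs" "xs ! fi v xs = v" "\<forall>k < fi v xs. xs ! k \<noteq> v" by auto
  show ?thesis
  proof (rule ccontr)
    assume "fi v xs \<noteq> i"
    then have "fi v xs < i \<or> i < fi v xs" by arith
    then show False using A assms by auto
  qed
qed

lemma inc_first_eq:
  "inc_first v xs = (if v \<in> set xs then Some (xs[fi v xs := Suc v]) else None)"
  by (induction xs) (auto simp: fi_def)

lemma apply_word_Cons:
  "apply_word (x # xs) a = Option.bind (apply_word xs a) (t_op x)"
  by (simp add: apply_word_def)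

lemma apply_word_Nil[simp]: "apply_word [] a = Some a"
  by (simp add: apply_word_def)

lemma apply_word_append:
  "apply_word (xs @ ys) a = Option.bind (apply_word ys a) (apply_word xs)"
  by (induction xs) (auto simp: apply_word_Cons bind_assoc apply_word_def)

lemma fi_cong:
  assumes "length xs = length ys" "\<forall>k<length xs. (xs ! k = v) = (ys ! k = v)"
  shows "(v \<in> set xs) = (v \<in> set ys) \<and> fi v xs = fi v ys"
proof -
  have s: "(v \<in> set xs) = (v \<in> set ys)" using assms by (auto simp: in_set_conv_nth)
  moreover have "fi v xs = fi v ys" if "v \<in> set xs"
  proof -
    from fi_props[OF that] have "fi v xs < length xs" "xs ! fi v xs = v" "\<forall>k < fi v xs. xs ! k \<noteq> v" by auto
    then show ?thesis using assms by (intro fi_eqI[symmetric]) auto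
  qed
  moreover have "fi v xs = fi v ys" if "v \<notin> set xs"
  proof -
    have "v \<notin> set ys" using s that by simp
    have h1: "takeWhile (\<lambda>y. y \<noteq> v) xs = xs" and h2: "takeWhile (\<lambda>y. y \<noteq> v) ys = ys"
      using that \<open>v \<notin> set ys\<close> by (auto simp: takeWhile_eq_all_conv)
    show ?thesis by (simp only: fi_def h1 h2 assms(1))
  qed
  ultimately show ?thesis by blast
qed

definition Bb :: "nat list \<Rightarrow> (nat \<times> nat) set" where
  "Bb d = {(p, c). 1 \<le> p \<and> p \<le> length d \<and> 1 \<le> c \<and> c \<le> d ! (length d - p)}"

definition stepbox :: "nat \<Rightarrow> nat list \<Rightarrow> nat \<times> nat" where
  "stepbox i d = (if i = 1 then length d + 1 else length d - fi (i - 1) d, i)"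

fun RB :: "nat list \<Rightarrow> nat list \<Rightarrow> (nat \<times> nat) set" where
  "RB [] d = {}"
| "RB (x # xs) d = RB xs d \<union> (case apply_word xs d of None \<Rightarrow> {} | Some e \<Rightarrow> {stepbox x e})"

lemma t_op_len: "t_op i d = Some d' \<Longrightarrow> length d \<le> length d'"
  by (auto simp: t_op_def inc_first_eq split: if_splits)

lemma t_op_box:
  assumes "t_op i d = Some d'"
  shows "Bb d' = insert (stepbox i d) (Bb d) \<and> stepbox i d \<notin> Bb d"
proof (cases "i = 1")
  case True
  then have d': "d' = 1 # d" using assms by (simp add: t_op_def)
  have "Bb d' = insert (length d + 1, 1) (Bb d)"
  proof (rule set_eqI, clarify)
    fix p c
    show "((p, c) \<in> Bb d') = ((p, c) \<in> insert (length d + 1, 1) (Bb d))"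
    proof (cases "p = length d + 1")
      case True then show ?thesis by (auto simp: Bb_def d')
    next
      case False
      then have "p \<le> length d \<Longrightarrow> (1 # d) ! (Suc (length d) - p) = d ! (length d - p)"
        by (simp add: Suc_diff_le)
      then show ?thesis using False by (auto simp: Bb_def d')
    qed
  qed
  then show ?thesis using True by (auto simp: stepbox_def Bb_def)
next
  case False
  then have i0: "i \<noteq> 0" using assms by (auto simp: t_op_def split: if_splits)
  let ?v = "i - 1"
  define f where "f = fi ?v d"
  have vin: "?v \<in> set d" and d': "d' = d[f := Suc ?v]"
    using assms False i0 by (auto simp: t_op_def inc_first_eq f_def split: if_splits)
  note F = fi_props[OF vin]
  have fl: "f < length d" "d ! f = ?v" using F f_def by auto
  have sb: "stepbox i d = (length d - f, i)" using False by (simp add: stepbox_def f_def)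
  have "Bb d' = insert (length d - f, i) (Bb d)"
  proof (rule set_eqI, clarify)
    fix p c
    show "((p, c) \<in> Bb d') = ((p, c) \<in> insert (length d - f, i) (Bb d))"
    proof (cases "p = length d - f")
      case True
      then have "length d - p = f" using fl by simp
      then show ?thesis using True fl i0 by (auto simp: Bb_def d')
    next
      case False
      then have "1 \<le> p \<Longrightarrow> p \<le> length d \<Longrightarrow> length d - p \<noteq> f" using fl by auto
      then show ?thesis using False by (auto simp: Bb_def d')
    qed
  qed
  moreover have "(length d - f, i) \<notin> Bb d" using fl i0 by (auto simp: Bb_def)
  ultimately show ?thesis using sb by simp
qed

lemma run_boxes:
  "apply_word xs d = Some e \<Longrightarrow> Bb e = Bb d \<union> RB xs d \<and> RB xs d \<inter> Bb d = {} \<and> length d \<le> length e"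
proof (induction xs arbitrary: e)
  case Nil then show ?case by simp
next
  case (Cons x xs)
  from Cons.prems obtain e1 where e1: "apply_word xs d = Some e1" and t: "t_op x e1 = Some e"
    by (cases "apply_word xs d") (auto simp: apply_word_Cons)
  note IH = Cons.IH[OF e1]
  note B = t_op_box[OF t]
  show ?case using IH B e1 t_op_len[OF t] by auto
qed

lemma RB_append:
  "apply_word ys d = Some e \<Longrightarrow> RB (xs @ ys) d = RB ys d \<union> RB xs e"
  by (induction xs) (auto simp: apply_word_append)

lemma RB_col: "(p, c) \<in> RB xs d \<Longrightarrow> c \<in> set xs"
  by (induction xs) (auto simp: stepbox_def split: option.splits if_splits)

lemma pres:
  assumes "\<forall>x\<in>set Q. j < x" "2 \<le> j" "apply_word Q d = Some e"
  shows "length e = length d \<and> (\<forall>k<length d. (e ! k = j - 1) = (d ! k = j - 1))"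
  using assms
proof (induction Q arbitrary: e)
  case Nil then show ?case by simp
next
  case (Cons x xs)
  from Cons.prems obtain e1 where e1: "apply_word xs d = Some e1" and t: "t_op x e1 = Some e"
    by (cases "apply_word xs d") (auto simp: apply_word_Cons)
  have IH: "length e1 = length d \<and> (\<forall>k<length d. (e1 ! k = j - 1) = (d ! k = j - 1))"
    using Cons.IH[OF _ _ e1] Cons.prems by auto
  have x: "j < x" using Cons.prems by auto
  let ?v = "x - 1"
  have vin: "?v \<in> set e1" and e: "e = e1[fi ?v e1 := Suc ?v]"
    using t x Cons.prems(2) by (auto simp: t_op_def inc_first_eq split: if_splits)
  note F = fi_props[OF vin]
  show ?case using IH F x Cons.prems(2) unfolding e
    by (auto simp: nth_list_update)
qed

lemma apply_word_single[simp]: "apply_word [x] a = t_op x a"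
  by (simp add: apply_word_def)

lemma inv_run:
  assumes "\<forall>x\<in>set Q. j < x" "2 \<le> j" "r < length d" "d ! r = j - 1" "apply_word Q d = Some e"
    "\<forall>p. (p, Suc j) \<in> RB Q d \<longrightarrow> length d - r < p"
  shows "apply_word Q (d[r := j]) = Some (e[r := j])"
  using assms
proof (induction Q arbitrary: e)
  case Nil then show ?case by simp
next
  case (Cons x xs)
  from Cons.prems obtain e1 where e1: "apply_word xs d = Some e1" and t: "t_op x e1 = Some e"
    by (cases "apply_word xs d") (auto simp: apply_word_Cons)
  have IH: "apply_word xs (d[r := j]) = Some (e1[r := j])"
    using Cons.IH[OF _ _ _ _ e1] Cons.prems by auto
  have P: "length e1 = length d \<and> (\<forall>k<length d. (e1 ! k = j - 1) = (d ! k = j - 1))"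
    using pres[OF _ _ e1] Cons.prems by auto
  have x: "j < x" using Cons.prems by auto
  let ?v = "x - 1"
  define f where "f = fi ?v e1"
  have vin: "?v \<in> set e1" and e: "e = e1[f := Suc ?v]"
    using t x Cons.prems(2) by (auto simp: t_op_def inc_first_eq f_def split: if_splits)
  note F = fi_props[OF vin, folded f_def]
  have e1r: "e1 ! r = j - 1" using P Cons.prems by auto
  have fr: "f \<noteq> r" using F e1r x Cons.prems(2) by auto
  have "r < f \<Longrightarrow> ?v \<noteq> j"
  proof
    assume "r < f" "?v = j"
    have "stepbox x e1 = (length e1 - f, Suc j)" using x \<open>?v = j\<close> Cons.prems(2)
      by (auto simp: stepbox_def f_def)
    then have "(length e1 - f, Suc j) \<in> RB (x # xs) d" using e1 by simp
    then have "length d - r < length e1 - f" using Cons.prems(6) by blast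
    then show False using \<open>r < f\<close> P by linarith
  qed
  then have f2: "fi ?v (e1[r := j]) = f"
    using F P Cons.prems(3) fr x by (intro fi_eqI) (auto simp: nth_list_update)
  have vin2: "?v \<in> set (e1[r := j])"
    using F fr by (metis length_list_update nth_list_update_neq nth_mem)
  have "t_op x (e1[r := j]) = Some ((e1[r := j])[f := Suc ?v])"
    using x Cons.prems(2) vin2 f2 by (auto simp: t_op_def inc_first_eq)
  then show ?case using IH e fr by (simp add: apply_word_Cons list_update_swap)
qed

lemma inv_run2:
  assumes "\<forall>x\<in>set Q. j < x" "2 \<le> j" "r < length d" "d ! r = j - 1" "apply_word Q (d[r := j]) = Some e'"
    "\<forall>p. (p, Suc j) \<in> RB Q (d[r := j]) \<longrightarrow> length d - r < p"
  shows "\<exists>e. apply_word Q d = Some e \<and> e' = e[r := j]"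
  using assms
proof (induction Q arbitrary: e')
  case Nil then show ?case by simp
next
  case (Cons x xs)
  from Cons.prems obtain e1' where e1': "apply_word xs (d[r := j]) = Some e1'" and t: "t_op x e1' = Some e'"
    by (cases "apply_word xs (d[r := j])") (auto simp: apply_word_Cons)
  obtain e1 where e1: "apply_word xs d = Some e1" and e1e: "e1' = e1[r := j]"
    using Cons.IH[OF _ _ _ _ e1'] Cons.prems by auto
  have P: "length e1 = length d \<and> (\<forall>k<length d. (e1 ! k = j - 1) = (d ! k = j - 1))"
    using pres[OF _ _ e1] Cons.prems by auto
  have x: "j < x" using Cons.prems by auto
  let ?v = "x - 1"
  define f where "f = fi ?v e1'"
  have vin: "?v \<in> set e1'" and e: "e' = e1'[f := Suc ?v]"
    using t x Cons.prems(2) by (auto simp: t_op_def inc_first_eq f_def split: if_splits)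
  note F = fi_props[OF vin, folded f_def]
  have e1r: "e1 ! r = j - 1" using P Cons.prems by auto
  have len1: "length e1' = length d" using P e1e by simp
  have vj: "?v = j \<Longrightarrow> f < r"
  proof -
    assume "?v = j"
    have "stepbox x e1' = (length e1' - f, Suc j)" using x \<open>?v = j\<close> Cons.prems(2)
      by (auto simp: stepbox_def f_def)
    then have "(length e1' - f, Suc j) \<in> RB (x # xs) (d[r := j])" using e1' by simp
    then have "length d - r < length e1' - f" using Cons.prems(6) by blast
    then show "f < r" using len1 by linarith
  qed
  have fr: "f \<noteq> r"
  proof
    assume "f = r"
    then have "?v = j" using F e1e P Cons.prems(3) by simp
    then show False using vj \<open>f = r\<close> by simp
  qed
  have f2: "fi ?v e1 = f"
  proof (rule fi_eqI)
    show "f < length e1" using F e1e by simp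
    show "e1 ! f = ?v" using F e1e fr by simp
    show "\<forall>k<f. e1 ! k \<noteq> ?v"
    proof (intro allI impI)
      fix k assume "k < f"
      show "e1 ! k \<noteq> ?v"
      proof (cases "k = r")
        case True
        then show ?thesis using e1r x Cons.prems(2) by simp
      next
        case False
        then show ?thesis using F \<open>k < f\<close> e1e by auto
      qed
    qed
  qed
  have vin1: "?v \<in> set e1" using F e1e fr
    by (metis length_list_update nth_list_update_neq nth_mem)
  have "t_op x e1 = Some (e1[f := Suc ?v])"
    using x Cons.prems(2) vin1 f2 by (auto simp: t_op_def inc_first_eq)
  then show ?case using e1 e e1e fr by (auto simp: apply_word_Cons list_update_swap)
qed

lemma tj_eq:
  assumes "2 \<le> j" "t_op j d = Some d'"
  shows "j - 1 \<in> set d \<and> d' = d[fi (j - 1) d := j]"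
  using assms by (auto simp: t_op_def inc_first_eq split: if_splits)

lemma core_XY:
  assumes Q: "\<forall>x\<in>set Q. j < x" and j2: "2 \<le> j"
    and X: "apply_word (j # Q) g = Some e"
    and cond: "\<forall>p. (p, Suc j) \<in> RB Q g \<longrightarrow> length g - fi (j - 1) g < p"
  shows "apply_word (Q @ [j]) g = Some e"
proof -
  from X obtain eQ where eQ: "apply_word Q g = Some eQ" and t: "t_op j eQ = Some e"
    by (cases "apply_word Q g") (auto simp: apply_word_Cons)
  have P: "length eQ = length g \<and> (\<forall>k<length g. (eQ ! k = j - 1) = (g ! k = j - 1))"
    using pres[OF Q j2 eQ] .
  note T = tj_eq[OF j2 t]
  have C: "(j - 1 \<in> set eQ) = (j - 1 \<in> set g) \<and> fi (j - 1) eQ = fi (j - 1) g"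
    using fi_cong[of eQ g "j - 1"] P by auto
  define r where "r = fi (j - 1) g"
  have ing: "j - 1 \<in> set g" using C T by simp
  note F = fi_props[OF ing, folded r_def]
  have e: "e = eQ[r := j]" using T C r_def by simp
  have tg: "t_op j g = Some (g[r := j])" using j2 ing by (auto simp: t_op_def inc_first_eq r_def)
  have "apply_word Q (g[r := j]) = Some (eQ[r := j])"
    using inv_run[OF Q j2 _ _ eQ] F cond r_def by auto
  then show ?thesis using tg e by (simp add: apply_word_append)
qed

lemma core_YX:
  assumes Q: "\<forall>x\<in>set Q. j < x" and j2: "2 \<le> j"
    and Y: "apply_word (Q @ [j]) g = Some e'"
    and cond: "\<forall>g'. t_op j g = Some g' \<longrightarrow> (\<forall>p. (p, Suc j) \<in> RB Q g' \<longrightarrow> length g - fi (j - 1) g < p)"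
  shows "apply_word (j # Q) g = Some e'"
proof -
  from Y obtain g' where tg: "t_op j g = Some g'" and ag: "apply_word Q g' = Some e'"
    by (cases "t_op j g") (auto simp: apply_word_append)
  define r where "r = fi (j - 1) g"
  note T = tj_eq[OF j2 tg, folded r_def]
  note F = fi_props[of "j - 1" g, folded r_def]
  obtain e where e: "apply_word Q g = Some e" and ee: "e' = e[r := j]"
    using inv_run2[OF Q j2, of r g e'] F T ag cond tg r_def by auto
  have P: "length e = length g \<and> (\<forall>k<length g. (e ! k = j - 1) = (g ! k = j - 1))"
    using pres[OF Q j2 e] .
  have C: "(j - 1 \<in> set e) = (j - 1 \<in> set g) \<and> fi (j - 1) e = fi (j - 1) g"
    using fi_cong[of e g "j - 1"] P by auto
  have "t_op j e = Some (e[r := j])" using j2 C T by (auto simp: t_op_def inc_first_eq r_def)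
  then show ?thesis using e ee by (simp add: apply_word_Cons)
qed

lemma skew_iff:
  assumes len: "length a \<le> length b"
  shows "(i, c) \<in> skew b a \<longleftrightarrow> 1 \<le> i \<and> i \<le> length b \<and> (length b + 1 - i, c) \<in> Bb b - Bb a"
proof
  assume H: "(i, c) \<in> skew b a"
  then have bx: "1 \<le> i" "i \<le> length b" "1 \<le> c" "c \<le> b ! (i - 1)" by (auto simp: skew_def boxes_def)
  have nr: "\<not> (\<exists>i' . i = length b - length a + i' \<and> 1 \<le> i' \<and> i' \<le> length a \<and> 1 \<le> c \<and> c \<le> a ! (i' - 1))"
    using H by (auto simp: skew_def)
  have "length b - (length b + 1 - i) = i - 1" using bx by simp
  then have inb: "(length b + 1 - i, c) \<in> Bb b" using bx by (auto simp: Bb_def)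
  have "(length b + 1 - i, c) \<notin> Bb a"
  proof
    assume "(length b + 1 - i, c) \<in> Bb a"
    then have h: "1 \<le> length b + 1 - i" "length b + 1 - i \<le> length a" "c \<le> a ! (length a - (length b + 1 - i))"
      by (auto simp: Bb_def)
    define i' where "i' = length a - (length b + 1 - i) + 1"
    have "i = length b - length a + i'" "1 \<le> i'" "i' \<le> length a" "i' - 1 = length a - (length b + 1 - i)"
      using h bx len unfolding i'_def by auto
    then show False using nr bx h by metis
  qed
  then show "1 \<le> i \<and> i \<le> length b \<and> (length b + 1 - i, c) \<in> Bb b - Bb a" using bx inb by simp
next
  assume H: "1 \<le> i \<and> i \<le> length b \<and> (length b + 1 - i, c) \<in> Bb b - Bb a"
  have e: "length b - (length b + 1 - i) = i - 1" using H by simp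
  have bx: "(i, c) \<in> boxes b" using H e by (auto simp: Bb_def boxes_def)
  have "\<not> (\<exists>i' . i = length b - length a + i' \<and> 1 \<le> i' \<and> i' \<le> length a \<and> 1 \<le> c \<and> c \<le> a ! (i' - 1))"
  proof
    assume "\<exists>i' . i = length b - length a + i' \<and> 1 \<le> i' \<and> i' \<le> length a \<and> 1 \<le> c \<and> c \<le> a ! (i' - 1)"
    then obtain i' where h: "i = length b - length a + i'" "1 \<le> i'" "i' \<le> length a" "1 \<le> c" "c \<le> a ! (i' - 1)" by blast
    have "length a - (length b + 1 - i) = i' - 1" "1 \<le> length b + 1 - i" "length b + 1 - i \<le> length a"
      using h len H by auto
    then have "(length b + 1 - i, c) \<in> Bb a" using h by (auto simp: Bb_def)
    then show False using H by simp
  qed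
  then show "(i, c) \<in> skew b a" using bx by (auto simp: skew_def)
qed

lemma len_mono: "apply_word w a = Some b \<Longrightarrow> length a \<le> length b"
  using run_boxes by blast

lemma skew_RB:
  assumes "apply_word w a = Some b" "(i, c) \<in> skew b a"
  shows "(length b + 1 - i, c) \<in> RB w a"
  using assms skew_iff[OF len_mono[OF assms(1)]] run_boxes[OF assms(1)] by auto

lemma RB_skew:
  assumes "apply_word w a = Some b" "(p, c) \<in> RB w a"
  shows "1 \<le> p \<and> p \<le> length b \<and> (length b + 1 - p, c) \<in> skew b a"
proof -
  have R: "Bb b = Bb a \<union> RB w a \<and> RB w a \<inter> Bb a = {}" using run_boxes[OF assms(1)] by blast
  then have "(p, c) \<in> Bb b - Bb a" using assms(2) by auto
  then have p: "1 \<le> p" "p \<le> length b" by (auto simp: Bb_def)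
  then have "length b + 1 - (length b + 1 - p) = p" by simp
  then show ?thesis using p skew_iff[OF len_mono[OF assms(1)], of "length b + 1 - p" c] \<open>(p, c) \<in> Bb b - Bb a\<close>
    by auto
qed

lemma NE_RB:
  assumes "apply_word w a = Some b" "j \<in> NE (skew b a)" "(p1, Suc j) \<in> RB w a" "(p2, j) \<in> RB w a"
  shows "p2 < p1"
proof -
  note A = RB_skew[OF assms(1) assms(3)] and B = RB_skew[OF assms(1) assms(4)]
  have "length b + 1 - p1 < length b + 1 - p2" using assms(2) A B by (auto simp: NE_def)
  then show ?thesis using A B by linarith
qed

lemma NE_col:
  assumes "apply_word w a = Some b" "j \<in> NE (skew b a)"
  shows "j \<in> set w \<and> Suc j \<in> set w"
proof -
  from assms(2) obtain i1 i2 where "(i1, Suc j) \<in> skew b a" "(i2, j) \<in> skew b a"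
    by (auto simp: NE_def supp_def)
  then show ?thesis using skew_RB[OF assms(1)] RB_col by blast
qed

lemma NE_ge2:
  assumes comp: "is_composition a" and ap: "apply_word w a = Some b" and ne: "j \<in> NE (skew b a)"
  shows "2 \<le> j"
proof -
  have len: "length a \<le> length b" using len_mono[OF ap] .
  have j0: "j \<noteq> 0" using ne by (auto simp: NE_def supp_def skew_def boxes_def)
  have "j \<noteq> 1"
  proof
    assume j1: "j = 1"
    from ne obtain i1 i2 where s1: "(i1, 2) \<in> skew b a" and s2: "(i2, 1) \<in> skew b a"
      by (auto simp: NE_def supp_def j1 numeral_2_eq_2)
    have ne2: "\<And>x y. (x, 2) \<in> skew b a \<Longrightarrow> (y, 1) \<in> skew b a \<Longrightarrow> x < y"
      using ne j1 by (auto simp: NE_def numeral_2_eq_2)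
    have c1: "\<And>y. (y, 1) \<in> skew b a \<Longrightarrow> y \<le> length b - length a"
    proof (rule ccontr)
      fix y assume y: "(y, 1) \<in> skew b a" "\<not> y \<le> length b - length a"
      define i' where "i' = y - (length b - length a)"
      have yb: "y \<le> length b" using y by (auto simp: skew_def boxes_def)
      have h: "y = length b - length a + i'" "1 \<le> i'" "i' \<le> length a" using y yb len unfolding i'_def by auto
      have "a ! (i' - 1) \<in> set a" using h by auto
      then have "1 \<le> a ! (i' - 1)" using comp by (auto simp: is_composition_def)
      then show False using y h by (auto simp: skew_def)
    qed
    have i1b: "(i1, 1) \<in> boxes b" using s1 by (auto simp: skew_def boxes_def)
    have "length b - length a < i1"
    proof (rule ccontr)
      assume "\<not> length b - length a < i1"
      then have "(i1, 1) \<in> skew b a" using i1b by (auto simp: skew_def)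
      then show False using ne2[OF s1] by blast
    qed
    then show False using c1[OF s2] ne2[OF s1 s2] by linarith
  qed
  then show ?thesis using j0 by linarith
qed

lemma rhw_unique:
  assumes "rhw_k v k" "rhw_k v k'" shows "k = k'"
proof (rule ccontr)
  assume "k \<noteq> k'"
  then consider "k < k'" | "k' < k" by arith
  then show False
  proof cases
    case 1
    have l: "k' < length v" using assms(2) by (simp add: rhw_k_def)
    have s1: "sorted (take (Suc k') v)" using assms(2) by (simp add: rhw_k_def)
    have "v ! k \<le> v ! Suc k"
      using s1 1 l by (auto simp: sorted_iff_nth_mono_less)
    moreover have "v ! k > v ! Suc k"
    proof -
      have s2: "sorted_wrt (>) (drop k v)" using assms(1) by (simp add: rhw_k_def)
      have "drop k v = v ! k # drop (Suc k) v" using 1 l by (simp add: Cons_nth_drop_Suc)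
      moreover have "drop (Suc k) v = v ! Suc k # drop (Suc (Suc k)) v" using 1 l by (simp add: Cons_nth_drop_Suc)
      ultimately have "sorted_wrt (>) (v ! k # v ! Suc k # drop (Suc (Suc k)) v)" using s2 by simp
      then show ?thesis by simp
    qed
    ultimately show False by simp
  next
    case 2
    have l: "k < length v" using assms(1) by (simp add: rhw_k_def)
    have s1: "sorted (take (Suc k) v)" using assms(1) by (simp add: rhw_k_def)
    have "v ! k' \<le> v ! Suc k'"
      using s1 2 l by (auto simp: sorted_iff_nth_mono_less)
    moreover have "v ! k' > v ! Suc k'"
    proof -
      have s2: "sorted_wrt (>) (drop k' v)" using assms(2) by (simp add: rhw_k_def)
      have "drop k' v = v ! k' # drop (Suc k') v" using 2 l by (simp add: Cons_nth_drop_Suc)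
      moreover have "drop (Suc k') v = v ! Suc k' # drop (Suc (Suc k')) v" using 2 l by (simp add: Cons_nth_drop_Suc)
      ultimately have "sorted_wrt (>) (v ! k' # v ! Suc k' # drop (Suc (Suc k')) v)" using s2 by simp
      then show ?thesis by simp
    qed
    ultimately show False by simp
  qed
qed

lemma leg_eq: "rhw_k v k \<Longrightarrow> leg v = set (drop k v)"
  unfolding leg_def using rhw_unique by (metis the_equality)

lemma rhw_parts:
  assumes "rhw_k v k"
  shows "sorted (take k v) \<and> sorted_wrt (>) (drop k v) \<and> drop k v \<noteq> [] \<and>
         (\<forall>x\<in>set v. x \<le> hd (drop k v))"
proof -
  have l: "k < length v" and s1: "sorted (take (Suc k) v)" and s2: "sorted_wrt (>) (drop k v)"
    using assms by (auto simp: rhw_k_def)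
  have st: "sorted (take k v)" using s1 sorted_wrt_take[of "(\<le>)" "take (Suc k) v" k] by (simp add: min_def)
  have hd: "hd (drop k v) = v ! k" using l by (simp add: hd_drop_conv_nth)
  have a1: "\<forall>x\<in>set (take k v). x \<le> v ! k"
  proof
    fix x assume "x \<in> set (take k v)"
    then obtain i where i: "i < k" "x = v ! i" using l by (auto simp: in_set_conv_nth)
    then show "x \<le> v ! k" using s1 l by (auto simp: sorted_iff_nth_mono_less)
  qed
  have a2: "\<forall>x\<in>set (drop k v). x \<le> v ! k"
  proof
    fix x assume "x \<in> set (drop k v)"
    then obtain i where i: "i < length (drop k v)" "x = drop k v ! i" by (auto simp: in_set_conv_nth)
    show "x \<le> v ! k"
    proof (cases "i = 0")
      case True then show ?thesis using i l by simp
    next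
      case False
      have "drop k v ! 0 > drop k v ! i" using sorted_wrt_nth_less[OF s2, of 0 i] i False by simp
      then show ?thesis using i l by simp
    qed
  qed
  have "set v = set (take k v) \<union> set (drop k v)" by (metis append_take_drop_id set_append)
  then show ?thesis using st s2 l hd a1 a2 by auto
qed

lemma rhw_intro:
  assumes "sorted A" "sorted_wrt (>) D" "D \<noteq> []" "\<forall>x\<in>set A. x \<le> hd D"
  shows "rhw_k (A @ D) (length A)"
proof -
  have "take (Suc (length A)) (A @ D) = A @ [hd D]" using assms(3) by (cases D) auto
  moreover have "sorted (A @ [hd D])" using assms by (auto simp: sorted_append)
  ultimately show ?thesis using assms by (auto simp: rhw_k_def)
qed

lemma split_sorted:
  fixes A :: "nat list"
  shows "sorted A \<Longrightarrow> A = filter (\<lambda>x. x < j) A @ replicate (count_list A j) j @ filter (\<lambda>x. j < x) A"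
proof (induction A)
  case Nil then show ?case by simp
next
  case (Cons x xs)
  have ge: "\<forall>y\<in>set xs. x \<le> y" and s: "sorted xs" using Cons.prems by auto
  note IH = Cons.IH[OF s]
  consider "x < j" | "x = j" | "j < x" using less_linear by blast
  then show ?case
  proof cases
    case 1
    have eq: "filter (\<lambda>x. x < j) (x # xs) @ replicate (count_list (x # xs) j) j @ filter (\<lambda>x. j < x) (x # xs)
      = x # (filter (\<lambda>x. x < j) xs @ replicate (count_list xs j) j @ filter (\<lambda>x. j < x) xs)"
      using 1 by simp
    show ?thesis by (subst eq, subst IH[symmetric], rule refl)
  next
    case 2
    have f0: "filter (\<lambda>x. x < j) xs = []" using ge 2 by (auto simp: filter_empty_conv)
    have eq: "filter (\<lambda>x. x < j) (x # xs) @ replicate (count_list (x # xs) j) j @ filter (\<lambda>x. j < x) (x # xs)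
      = x # (filter (\<lambda>x. x < j) xs @ replicate (count_list xs j) j @ filter (\<lambda>x. j < x) xs)"
      using 2 f0 by simp
    show ?thesis by (subst eq, subst IH[symmetric], rule refl)
  next
    case 3
    have f: "filter (\<lambda>x. x < j) xs = []" "filter (\<lambda>x. j < x) xs = xs" "count_list xs j = 0"
      using ge 3 by (auto simp: filter_empty_conv count_list_0_iff filter_id_conv)
    show ?thesis using 3 f by simp
  qed
qed

lemma split_dec:
  fixes D :: "nat list"
  shows "sorted_wrt (>) D \<Longrightarrow> D = filter (\<lambda>x. j < x) D @ (if j \<in> set D then [j] else []) @ filter (\<lambda>x. x < j) D"
proof (induction D)
  case Nil then show ?case by simp
next
  case (Cons x xs)
  have gt: "\<forall>y\<in>set xs. y < x" and s: "sorted_wrt (>) xs" using Cons.prems by auto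
  note IH = Cons.IH[OF s]
  consider "x < j" | "x = j" | "j < x" using less_linear by blast
  then show ?case
  proof cases
    case 1
    have f: "filter (\<lambda>x. j < x) xs = []" "filter (\<lambda>x. x < j) xs = xs" "j \<notin> set xs"
      using gt 1 by (auto simp: filter_empty_conv filter_id_conv)
    show ?thesis using 1 f by simp
  next
    case 2
    have f: "filter (\<lambda>x. j < x) xs = []" "filter (\<lambda>x. x < j) xs = xs" "j \<notin> set xs"
      using gt 2 by (auto simp: filter_empty_conv filter_id_conv)
    show ?thesis using 2 f by simp
  next
    case 3
    have eq: "filter (\<lambda>x. j < x) (x # xs) @ (if j \<in> set (x # xs) then [j] else []) @ filter (\<lambda>x. x < j) (x # xs)
      = x # (filter (\<lambda>x. j < x) xs @ (if j \<in> set xs then [j] else []) @ filter (\<lambda>x. x < j) xs)"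
      using 3 by simp
    show ?thesis by (subst eq, subst IH[symmetric], rule refl)
  qed
qed

lemma dec_unique:
  fixes D1 D2 :: "nat list"
  assumes "sorted_wrt (>) D1" "sorted_wrt (>) D2" "set D1 = set D2"
  shows "D1 = D2"
proof -
  have "sorted_wrt (<) (rev D1)" "sorted_wrt (<) (rev D2)" using assms by (auto simp: sorted_wrt_rev)
  then have "rev D1 = rev D2" using assms(3)
    using sorted_distinct_set_unique[of "rev D1" "rev D2"] by (simp add: strict_sorted_iff)
  then show ?thesis by simp
qed

lemma finish:
  assumes wC: "w \<in> CRHW n" and rk: "rhw_k w k"
    and sA: "sorted Ac" and sD: "sorted_wrt (>) Dc" and Dne: "Dc \<noteq> []"
    and le: "\<forall>x\<in>set w. x \<le> hd Dc"
    and ms: "mset Ac + mset Dc = mset w" and sL: "set Dc = L'"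
    and ap: "apply_word (Ac @ Dc) a = Some b"
  shows "(\<exists>w'. reverse_hookword w' \<and> content w' = content w \<and> leg w' = L') \<and>
         (\<forall>w'. reverse_hookword w' \<and> content w' = content w \<and> leg w' = L' \<longrightarrow>
                w' \<in> CRHW n \<and> apply_word w' a = Some b)"
proof -
  have msw: "mset (Ac @ Dc) = mset w" using ms by simp
  have setw: "set (Ac @ Dc) = set w" using mset_eq_setD[OF msw] .
  have lenw: "length (Ac @ Dc) = length w" using mset_eq_length[OF msw] .
  have cont: "content (Ac @ Dc) = content w"
  proof -
    have "count_list (Ac @ Dc) x = count_list w x" for x
    proof -
      have "count (mset (Ac @ Dc)) x = count (mset w) x" using msw by (rule arg_cong)
      then show ?thesis by (simp only: count_mset)
    qed
    then show ?thesis unfolding content_def by (rule ext)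
  qed
  have leA: "\<forall>x\<in>set Ac. x \<le> hd Dc"
  proof
    fix x assume "x \<in> set Ac"
    then have "x \<in> set w" using setw by (metis Un_iff set_append)
    then show "x \<le> hd Dc" using le by blast
  qed
  have rk2: "rhw_k (Ac @ Dc) (length Ac)"
    using rhw_intro[OF sA sD Dne leA] .
  have rhw: "reverse_hookword w" "connected_word w" "length w = n" using wC by (auto simp: CRHW_def)
  have RH: "reverse_hookword (Ac @ Dc)" using rhw(1) rk2 setw by (auto simp: reverse_hookword_def)
  have lg: "leg (Ac @ Dc) = L'" using leg_eq[OF rk2] sL by simp
  have "w' = Ac @ Dc" if H: "reverse_hookword w'" "content w' = content w" "leg w' = L'" for w'
  proof -
    obtain k' where k': "rhw_k w' k'" using H by (auto simp: reverse_hookword_def)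
    have mw: "mset w' = mset w"
    proof (rule multiset_eqI)
      fix x
      have "count_list w' x = count_list w x" using H(2) unfolding content_def by metis
      then show "count (mset w') x = count (mset w) x" by (simp only: count_mset)
    qed
    note Pp = rhw_parts[OF k']
    have sd: "sorted_wrt (>) (drop k' w')" and st: "sorted (take k' w')" using Pp by auto
    have setd: "set (drop k' w') = set Dc" using leg_eq[OF k'] H(3) sL by simp
    have d: "drop k' w' = Dc" using dec_unique[OF sd sD setd] .
    have "mset w' = mset (take k' w') + mset (drop k' w')"
      by (metis append_take_drop_id mset_append)
    then have "mset (take k' w') + mset Dc = mset Ac + mset Dc" using mw d ms by simp
    then have mt: "mset (take k' w') = mset Ac" by simp
    have "sort Ac = take k' w'" using properties_for_sort[OF mt st] .
    moreover have "sort Ac = Ac" using properties_for_sort[OF refl sA] .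
    ultimately have "take k' w' = Ac" by simp
    then show ?thesis using d by (metis append_take_drop_id)
  qed
  moreover have "Ac @ Dc \<in> CRHW n"
  proof -
    have cw: "connected_word (Ac @ Dc)" using rhw(2) unfolding connected_word_def setw .
    have "length (Ac @ Dc) = n" using lenw rhw(3) by simp
    then show ?thesis using RH cw unfolding CRHW_def by blast
  qed
  ultimately show ?thesis using RH cont lg ap by blast
qed

lemma core_XY':
  assumes Q: "\<forall>x\<in>set Q. j < x" and j2: "2 \<le> j"
    and X: "apply_word (j # Q) g = Some e"
    and cond: "\<forall>p1 p2. (p1, Suc j) \<in> RB (j # Q) g \<longrightarrow> (p2, j) \<in> RB (j # Q) g \<longrightarrow> p2 < p1"
  shows "apply_word (Q @ [j]) g = Some e"
proof (rule core_XY[OF Q j2 X])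
  from X obtain eQ where eQ: "apply_word Q g = Some eQ" and t: "t_op j eQ = Some e"
    by (cases "apply_word Q g") (auto simp: apply_word_Cons)
  have P: "length eQ = length g \<and> (\<forall>k<length g. (eQ ! k = j - 1) = (g ! k = j - 1))"
    using pres[OF Q j2 eQ] .
  have C: "fi (j - 1) eQ = fi (j - 1) g"
    using fi_cong[of eQ g "j - 1"] P by auto
  have sb: "stepbox j eQ = (length g - fi (j - 1) g, j)" using j2 P C by (simp add: stepbox_def)
  have inb: "(length g - fi (j - 1) g, j) \<in> RB (j # Q) g" using eQ sb by simp
  show "\<forall>p. (p, Suc j) \<in> RB Q g \<longrightarrow> length g - fi (j - 1) g < p"
    using cond inb by auto
qed

lemma core_YX':
  assumes Q: "\<forall>x\<in>set Q. j < x" and j2: "2 \<le> j"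
    and Y: "apply_word (Q @ [j]) g = Some e'"
    and cond: "\<forall>p1 p2. (p1, Suc j) \<in> RB (Q @ [j]) g \<longrightarrow> (p2, j) \<in> RB (Q @ [j]) g \<longrightarrow> p2 < p1"
  shows "apply_word (j # Q) g = Some e'"
proof (rule core_YX[OF Q j2 Y], intro allI impI)
  fix g' p assume tg: "t_op j g = Some g'" and p: "(p, Suc j) \<in> RB Q g'"
  have ap1: "apply_word [j] g = Some g'" using tg by simp
  have R: "RB (Q @ [j]) g = RB [j] g \<union> RB Q g'" using RB_append[OF ap1] .
  have sb: "stepbox j g = (length g - fi (j - 1) g, j)" using j2 by (simp add: stepbox_def)
  have "(length g - fi (j - 1) g, j) \<in> RB (Q @ [j]) g" using R sb by simp
  moreover have "(p, Suc j) \<in> RB (Q @ [j]) g" using R p by simp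
  ultimately show "length g - fi (j - 1) g < p" using cond by blast
qed

lemma RB_mid:
  assumes "apply_word R a = Some g" "apply_word X g = Some e0"
  shows "RB X g \<subseteq> RB (P @ X @ R) a"
proof -
  have "apply_word (X @ R) a = Some e0" using assms by (simp add: apply_word_append)
  then have "RB (P @ (X @ R)) a = RB (X @ R) a \<union> RB P e0" using RB_append by blast
  moreover have "RB (X @ R) a = RB R a \<union> RB X g" using RB_append[OF assms(1)] .
  ultimately show ?thesis by auto
qed

lemma decomp3:
  assumes "apply_word (P @ X @ R) a = Some b"
  shows "\<exists>g e0. apply_word R a = Some g \<and> apply_word X g = Some e0 \<and> apply_word P e0 = Some b"
  using assms by (cases "apply_word R a"; cases "apply_word (X @ R) a") (auto simp: apply_word_append)

lemma comp3:
  assumes "apply_word R a = Some g" "apply_word X g = Some e0" "apply_word P e0 = Some b"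
  shows "apply_word (P @ X @ R) a = Some b"
  using assms by (simp add: apply_word_append)

theorem mainTheorem16:
  fixes \<alpha> \<beta> w :: "nat list" and n j :: nat
  assumes "is_composition \<alpha>"
    and "c_less \<alpha> \<beta>"
    and "nc_border_strip (skew \<beta> \<alpha>)"
    and "card (skew \<beta> \<alpha>) = n"
    and "j \<in> NE (skew \<beta> \<alpha>)"
    and "w \<in> CRHW n"
    and "apply_word w \<alpha> = Some \<beta>"
  defines "L' \<equiv> (if j \<in> leg w then leg w - {j} else insert j (leg w))"
  shows "(\<exists>w'. reverse_hookword w' \<and> content w' = content w \<and> leg w' = L') \<and>
         (\<forall>w'. reverse_hookword w' \<and> content w' = content w \<and> leg w' = L' \<longrightarrow>
                w' \<in> CRHW n \<and> apply_word w' \<alpha> = Some \<beta>)"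
proof -
  have wC: "w \<in> CRHW n" and ap: "apply_word w \<alpha> = Some \<beta>" and ne: "j \<in> NE (skew \<beta> \<alpha>)"
    using assms by auto
  obtain k where rk: "rhw_k w k" using wC by (auto simp: CRHW_def reverse_hookword_def)
  define A where "A = take k w"
  define D where "D = drop k w"
  have Pw: "sorted A" "sorted_wrt (>) D" "D \<noteq> []" "\<forall>x\<in>set w. x \<le> hd D"
    using rhw_parts[OF rk] A_def D_def by auto
  have wAD: "w = A @ D" by (simp add: A_def D_def)
  have j2: "2 \<le> j" using NE_ge2[OF assms(1) ap ne] .
  have jw: "j \<in> set w" "Suc j \<in> set w" using NE_col[OF ap ne] by auto
  have legw: "leg w = set D" using leg_eq[OF rk] D_def by simp
  have NEc: "\<forall>p1 p2. (p1, Suc j) \<in> RB w \<alpha> \<longrightarrow> (p2, j) \<in> RB w \<alpha> \<longrightarrow> p2 < p1"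
    using NE_RB[OF ap ne] by blast
  define Alt where "Alt = filter (\<lambda>x. x < j) A"
  define Agt where "Agt = filter (\<lambda>x. j < x) A"
  define a where "a = count_list A j"
  define Dgt where "Dgt = filter (\<lambda>x. j < x) D"
  define Dlt where "Dlt = filter (\<lambda>x. x < j) D"
  have sA: "A = Alt @ replicate a j @ Agt"
    using split_sorted[OF Pw(1), of j] by (simp add: Alt_def Agt_def a_def)
  have sD: "D = Dgt @ (if j \<in> set D then [j] else []) @ Dlt"
    using split_dec[OF Pw(2), of j] by (simp add: Dgt_def Dlt_def)
  have hdD: "j < hd D" using Pw(4) jw(2) by fastforce
  have Dgt_ne: "Dgt \<noteq> []"
  proof
    assume "Dgt = []"
    then have "hd D \<in> set ((if j \<in> set D then [j] else []) @ Dlt)"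
      using sD Pw(3) by (metis append_self_conv2 list.set_sel(1))
    then show False using hdD by (auto simp: Dlt_def split: if_splits)
  qed
  have hdDgt: "hd Dgt = hd D" using sD Dgt_ne by (metis hd_append2)
  have sAlt: "sorted Alt" "sorted Agt" using Pw(1) sorted_wrt_filter by (auto simp: Alt_def Agt_def)
  have sDgt: "sorted_wrt (>) Dgt" "sorted_wrt (>) Dlt" using Pw(2) by (auto simp: Dgt_def Dlt_def sorted_wrt_filter)
  have elt: "\<forall>x\<in>set Alt. x < j" "\<forall>x\<in>set Agt. j < x" "\<forall>x\<in>set Dgt. j < x" "\<forall>x\<in>set Dlt. x < j"
    by (auto simp: Alt_def Agt_def Dgt_def Dlt_def)
  have gl: "\<forall>x\<in>set Dgt. \<forall>y\<in>set Dlt. y < x" using elt by (meson less_trans)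
  define Q where "Q = Agt @ Dgt"
  have Qgt: "\<forall>x\<in>set Q. j < x" using elt by (auto simp: Q_def)
  have sortAc: "\<And>m. sorted (Alt @ replicate m j @ Agt)"
  proof -
    fix m
    have "\<forall>x\<in>set Alt. \<forall>y\<in>set Agt. x \<le> y" using elt by (meson less_imp_le less_trans)
    then show "sorted (Alt @ replicate m j @ Agt)" using sAlt elt by (auto simp: sorted_append less_imp_le)
  qed
  have msA: "mset w = mset Alt + replicate_mset a j + mset Agt + mset D"
    using wAD sA by simp
  show ?thesis
  proof (cases "j \<in> set D")
    case True
    define Ac where "Ac = Alt @ replicate (Suc a) j @ Agt"
    define Dc where "Dc = Dgt @ Dlt"
    define P where "P = Alt @ replicate a j"
    have w1: "w = P @ (Q @ [j]) @ Dlt" using wAD sA sD True by (simp add: P_def Q_def)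
    have w2: "Ac @ Dc = P @ (j # Q) @ Dlt"
      by (simp add: Ac_def Dc_def P_def Q_def replicate_append_same[symmetric])
    obtain g e0 where g: "apply_word Dlt \<alpha> = Some g" "apply_word (Q @ [j]) g = Some e0" "apply_word P e0 = Some \<beta>"
      using decomp3[of P "Q @ [j]" Dlt \<alpha> \<beta>] ap w1 by auto
    have sub: "RB (Q @ [j]) g \<subseteq> RB w \<alpha>" using RB_mid[OF g(1) g(2), of P] w1 by simp
    have "apply_word (j # Q) g = Some e0"
      using core_YX'[OF Qgt j2 g(2)] NEc sub by blast
    then have "apply_word (P @ (j # Q) @ Dlt) \<alpha> = Some \<beta>" by (rule comp3[OF g(1) _ g(3)])
    then have apc: "apply_word (Ac @ Dc) \<alpha> = Some \<beta>" using w2 by simp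
    have sDc: "sorted_wrt (>) Dc" using sDgt elt gl by (auto simp: Dc_def sorted_wrt_append)
    have hdc: "hd Dc = hd D" using hdDgt Dgt_ne by (simp add: Dc_def)
    have ms: "mset Ac + mset Dc = mset w" using msA sD True by (simp add: Ac_def Dc_def)
    have jn: "j \<notin> set Dgt" "j \<notin> set Dlt" using elt by auto
    have sL: "set Dc = L'" using True legw sD jn by (auto simp: L'_def Dc_def)
    show ?thesis using finish[OF wC rk sortAc[of "Suc a", folded Ac_def] sDc _ _ ms sL apc] Dgt_ne hdc Pw(4)
      by (simp add: Dc_def)
  next
    case False
    have apos: "0 < a"
    proof -
      have "j \<in> set A" using jw(1) wAD False by auto
      then have "j \<in> set (replicate a j)" using sA elt by auto
      then show ?thesis by simp
    qed
    define Ac where "Ac = Alt @ replicate (a - 1) j @ Agt"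
    define Dc where "Dc = Dgt @ [j] @ Dlt"
    define P where "P = Alt @ replicate (a - 1) j"
    have ra: "replicate a j = replicate (a - 1) j @ [j]"
      using apos by (cases a) (simp_all add: replicate_append_same)
    have w1: "w = P @ (j # Q) @ Dlt" using wAD sA sD False ra by (simp add: P_def Q_def)
    have w2: "Ac @ Dc = P @ (Q @ [j]) @ Dlt"
      by (simp add: Ac_def Dc_def P_def Q_def)
    obtain g e0 where g: "apply_word Dlt \<alpha> = Some g" "apply_word (j # Q) g = Some e0" "apply_word P e0 = Some \<beta>"
      using decomp3[of P "j # Q" Dlt \<alpha> \<beta>] ap w1 by auto
    have sub: "RB (j # Q) g \<subseteq> RB w \<alpha>" using RB_mid[OF g(1) g(2), of P] w1 by simp
    have "apply_word (Q @ [j]) g = Some e0"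
      using core_XY'[OF Qgt j2 g(2)] NEc sub by blast
    then have "apply_word (P @ (Q @ [j]) @ Dlt) \<alpha> = Some \<beta>" by (rule comp3[OF g(1) _ g(3)])
    then have apc: "apply_word (Ac @ Dc) \<alpha> = Some \<beta>" using w2 by simp
    have sDc: "sorted_wrt (>) Dc" using sDgt elt gl by (auto simp: Dc_def sorted_wrt_append)
    have hdc: "hd Dc = hd D" using hdDgt Dgt_ne by (simp add: Dc_def)
    have ms: "mset Ac + mset Dc = mset w"
    proof -
      have "replicate_mset a j = replicate_mset (a - 1) j + {#j#}"
        using apos by (cases a) simp_all
      then show ?thesis using msA sD False by (simp add: Ac_def Dc_def)
    qed
    have sL: "set Dc = L'" using False legw sD by (auto simp: L'_def Dc_def)
    show ?thesis using finish[OF wC rk sortAc[of "a - 1", folded Ac_def] sDc _ _ ms sL apc] Dgt_ne hdc Pw(4)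
      by (simp add: Dc_def)
  qed
qed

end
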